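(* Let $a,b,c,d\in\mathbb C$ with $a\notin\mathbb Z$ and $d\notin\{0,-1,-2,\dots\}$. Then, as an identity of formal power series in $x,y$, $${}_1F_1(a;d;x)\,F(b,c;1-a;y)=\mathrm H_{11}(a,b,c;d;x,-y)+\sum_{k=1}^\infty\sum_{l=1}^k\frac{(-1)^{k-l}(k-1)!}{(l-1)!\,l!\,(k-l)!}\,\frac{(b)_k(c)_k}{(1-a)_k(1-a)_{k-l}(d)_l}\,x^ly^k\,\mathrm H_{11}(a-k+l,b+k,c+k;d+l;x,-y).$$
   Context: Pochhammer symbol: $(\lambda)_k=\Gamma(\lambda+k)/\Gamma(\lambda)$ for every integer $k$ (possibly negative) whenever defined; $(\lambda)_0=1$. $F(a,b;c;x)=\sum_{k\ge0}\frac{(a)_k(b)_k}{(c)_k k!}x^k$, ${}_1F_1(a;c;x)=\sum_{k\ge0}\frac{(a)_k}{(c)_k k!}x^k$. Confluent Horn function $\mathrm H_{11}(a,b,c;d;x,y)=\sum_{p,q\ge0}\frac{(a)_{p-q}(b)_q(c)_q}{(d)_p\,p!\,q!}x^py^q$. All functions are regarded as formal power series in $x,y$; the infinite double sum converges in the formal (degree) topology. *)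

theory Defs
  imports Complex_Main
begin

text \<open>Formal power series in two variables x, y, represented by their coefficient
  arrays: F p q is the coefficient of x^p y^q.\<close>
type_synonym bser = "nat \<Rightarrow> nat \<Rightarrow> complex"

definition bmul :: "bser \<Rightarrow> bser \<Rightarrow> bser" where
  "bmul F G = (\<lambda>p q. \<Sum>i\<le>p. \<Sum>j\<le>q. F i j * G (p - i) (q - j))"

definition badd :: "bser \<Rightarrow> bser \<Rightarrow> bser" where
  "badd F G = (\<lambda>p q. F p q + G p q)"

definition bsmult :: "complex \<Rightarrow> bser \<Rightarrow> bser" where
  "bsmult c F = (\<lambda>p q. c * F p q)"

definition bmono :: "nat \<Rightarrow> nat \<Rightarrow> bser" where
  "bmono l k = (\<lambda>p q. if p = l \<and> q = k then 1 else 0)"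

text \<open>Formal (coefficientwise) sum of a family of series: each coefficient is the
  sum of the (finitely many, when the family is summable in the formal topology)
  nonzero contributions.\<close>
definition bsum :: "('i \<Rightarrow> bser) \<Rightarrow> 'i set \<Rightarrow> bser" where
  "bsum F I = (\<lambda>p q. \<Sum>i\<in>{i\<in>I. F i p q \<noteq> 0}. F i p q)"

definition bsummable :: "('i \<Rightarrow> bser) \<Rightarrow> 'i set \<Rightarrow> bool" where
  "bsummable F I \<longleftrightarrow> (\<forall>p q. finite {i\<in>I. F i p q \<noteq> 0})"

text \<open>Pochhammer symbol with integer index:
  (a)_k = Gamma(a+k)/Gamma(a); for negative k this is 1/((a+k)(a+k+1)...(a-1)).\<close>
definition poch_int :: "complex \<Rightarrow> int \<Rightarrow> complex" where
  "poch_int a k = (if 0 \<le> k then pochhammer a (nat k)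
                   else 1 / pochhammer (a + of_int k) (nat (- k)))"

definition hyp1F1 :: "complex \<Rightarrow> complex \<Rightarrow> bser" where
  "hyp1F1 a c = (\<lambda>p q. if q = 0 then pochhammer a p / (pochhammer c p * fact p) else 0)"

definition hyp2F1y :: "complex \<Rightarrow> complex \<Rightarrow> complex \<Rightarrow> bser" where
  "hyp2F1y a b c = (\<lambda>p q. if p = 0 then pochhammer a q * pochhammer b q / (pochhammer c q * fact q) else 0)"

definition H11 :: "complex \<Rightarrow> complex \<Rightarrow> complex \<Rightarrow> complex \<Rightarrow> bser" where
  "H11 a b c d = (\<lambda>p q. poch_int a (int p - int q) * pochhammer b q * pochhammer c q
                          / (pochhammer d p * fact p * fact q))"

definition bnegy :: "bser \<Rightarrow> bser" where
  "bnegy F = (\<lambda>p q. (-1) ^ q * F p q)"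

end

theory Submission imports Defs "HOL-Analysis.Analysis" begin


lemma bmul_mono_coeff:
  "bmul (bmono l k) G p q = (if l \<le> p \<and> k \<le> q then G (p - l) (q - k) else 0)"
proof -
  have "bmul (bmono l k) G p q = (\<Sum>i\<le>p. \<Sum>j\<le>q. if i = l then (if j = k then G (p - i) (q - j) else 0) else 0)"
    unfolding bmul_def bmono_def by (intro sum.cong refl) auto
  also have "\<dots> = (\<Sum>i\<le>p. if i = l then (if k \<le> q then G (p - i) (q - k) else 0) else 0)"
    by (intro sum.cong refl) (auto simp: sum.delta')
  also have "\<dots> = (if l \<le> p \<and> k \<le> q then G (p - l) (q - k) else 0)"
    by (auto simp: sum.delta')
  finally show ?thesis .
qed

lemma bmul_hyp:
  "bmul (hyp1F1 a d) (hyp2F1y b c e) p q = pochhammer a p / (pochhammer d p * fact p) * (pochhammer b q * pochhammer c q / (pochhammer e q * fact q))"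
proof -
  have "bmul (hyp1F1 a d) (hyp2F1y b c e) p q = (\<Sum>i\<le>p. \<Sum>j\<le>q. if i = p then (if j = 0 then hyp1F1 a d p 0 * hyp2F1y b c e 0 q else 0) else 0)"
    unfolding bmul_def by (intro sum.cong refl) (auto simp: hyp1F1_def hyp2F1y_def)
  also have "\<dots> = (\<Sum>i\<le>p. if i = p then hyp1F1 a d p 0 * hyp2F1y b c e 0 q else 0)"
    by (intro sum.cong refl) (auto simp: sum.delta')
  also have "\<dots> = hyp1F1 a d p 0 * hyp2F1y b c e 0 q"
    by (simp add: sum.delta')
  finally show ?thesis by (simp add: hyp1F1_def hyp2F1y_def)
qed

lemma notint_shift:
  fixes a :: complex
  assumes "a \<notin> \<int>"
  shows "a + of_int n \<notin> \<int>\<^sub>\<le>\<^sub>0" "a + of_int n \<notin> \<int>"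
proof -
  show "a + of_int n \<notin> \<int>"
  proof
    assume "a + of_int n \<in> \<int>"
    then have "a + of_int n - of_int n \<in> \<int>" by (intro Ints_diff) auto
    with assms show False by simp
  qed
  then show "a + of_int n \<notin> \<int>\<^sub>\<le>\<^sub>0" using nonpos_Ints_subset_Ints by blast
qed

lemma poch_int_Gamma:
  fixes a :: complex
  assumes "a \<notin> \<int>"
  shows "poch_int a k = Gamma (a + of_int k) / Gamma a"
proof (cases "0 \<le> k")
  case True
  have a0: "a \<notin> \<int>\<^sub>\<le>\<^sub>0" using notint_shift[OF assms, of 0] by simp
  have "of_int k = (of_nat (nat k) :: complex)" using True by simp
  then show ?thesis using True pochhammer_Gamma[OF a0, of "nat k"] by (simp add: poch_int_def)
next
  case False
  have a1: "a + of_int k \<notin> \<int>\<^sub>\<le>\<^sub>0" using notint_shift[OF assms] by simp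
  have e: "a + of_int k + of_nat (nat (-k)) = a" using False by simp
  have "pochhammer (a + of_int k) (nat (-k)) = Gamma a / Gamma (a + of_int k)"
    using pochhammer_Gamma[OF a1, of "nat (-k)"] e by simp
  then show ?thesis using False by (simp add: poch_int_def)
qed



lemma vand_sum:
  assumes "1 \<le> k"
  shows "(\<Sum>l\<in>{1..min k p}. ((k-1) choose (l-1)) * (p choose l)) = (p+k-1) choose k"
proof -
  have "(p+k-1) choose k = (\<Sum>j\<le>k. (p choose j) * ((k-1) choose (k - j)))"
    using vandermonde[of p "k-1" k] assms by simp
  also have "\<dots> = (\<Sum>j\<in>{1..min k p}. (p choose j) * ((k-1) choose (k - j)))"
  proof (rule sum.mono_neutral_right)
    show "\<forall>i\<in>{..k} - {1..min k p}. (p choose i) * ((k-1) choose (k - i)) = 0"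
    proof
      fix i assume "i \<in> {..k} - {1..min k p}"
      then have "i = 0 \<or> p < i" by auto
      then show "(p choose i) * ((k-1) choose (k - i)) = 0" using assms by auto
    qed
  qed auto
  also have "\<dots> = (\<Sum>l\<in>{1..min k p}. ((k-1) choose (l-1)) * (p choose l))"
  proof (intro sum.cong refl)
    fix l assume l: "l \<in> {1..min k p}"
    have "(k-1) choose (l-1) = (k-1) choose (k - 1 - (l - 1))"
      using l by (intro binomial_symmetric) auto
    also have "k - 1 - (l - 1) = k - l" using l by auto
    finally show "(p choose l) * ((k-1) choose (k - l)) = ((k-1) choose (l-1)) * (p choose l)"
      by simp
  qed
  finally show ?thesis by simp
qed

lemma term_fact:
  assumes "1 \<le> l" "l \<le> k" "l \<le> p"
  shows "fact (k-1) * fact p / (fact (l-1) * fact l * fact (k-l) * fact (p-l))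
     = (of_nat (((k-1) choose (l-1)) * (p choose l)) :: complex)"
proof -
  have e: "k - 1 - (l - 1) = k - l" using assms by auto
  have e1: "(of_nat ((k-1) choose (l-1)) :: complex) = fact (k-1) / (fact (l-1) * fact (k - l))"
    using binomial_fact[of "l-1" "k-1", where 'a=complex] assms e by simp
  have e2: "(of_nat (p choose l) :: complex) = fact p / (fact l * fact (p - l))"
    using binomial_fact[of l p, where 'a=complex] assms by simp
  show ?thesis unfolding of_nat_mult e1 e2 by (simp add: field_simps)
qed

lemma chu:
  fixes a :: complex
  assumes "a \<notin> \<int>"
  shows "(\<Sum>k\<le>q. (-1)^(q-k) * of_nat ((p+k-1) choose k) / (pochhammer (1-a) k * fact (q-k)))
       = pochhammer (a + of_int (int p - int q)) q / (pochhammer (1-a) q * fact q)"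
proof -
  have nz: "pochhammer (1 - a) n \<noteq> 0" for n
  proof
    assume "pochhammer (1 - a) n = 0"
    then obtain j where "1 - a = - of_nat j" by (auto simp: pochhammer_eq_0_iff)
    then have "a = of_int (int j + 1)" by (simp add: algebra_simps)
    with assms show False by auto
  qed
  have t: "(-1)^(q-k) * of_nat ((p+k-1) choose k) / (pochhammer (1-a) k * fact (q-k))
     = (-1)^q * (((- of_nat p) gchoose k) * ((of_nat q - a) gchoose (q - k))) / pochhammer (1-a) q"
    if k: "k \<le> q" for k
  proof -
    have c: "(of_nat ((p+k-1) choose k) :: complex) = (-1)^k * ((- of_nat p) gchoose k)"
    proof (cases "p + k = 0")
      case True then show ?thesis by simp
    next
      case False
      have "(- of_nat p :: complex) gchoose k = (-1)^k * ((of_nat k - (- of_nat p) - 1) gchoose k)"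
        by (rule gbinomial_negated_upper)
      also have "(of_nat k - (- of_nat p) - 1 :: complex) = of_nat (p + k - 1)"
      proof -
        have "(of_nat (p+k-1) :: complex) = of_nat (p+k) - of_nat 1"
          using False by (subst of_nat_diff) auto
        then show ?thesis by simp
      qed
      finally show ?thesis by (simp add: binomial_gbinomial)
    qed
    have g: "(of_nat q - a) gchoose (q - k) = pochhammer (1 - a + of_nat k) (q - k) / fact (q - k)"
    proof -
      have "(of_nat q - a) gchoose (q - k) = pochhammer (of_nat q - a - of_nat (q - k) + 1) (q - k) / fact (q - k)"
        by (rule gbinomial_pochhammer')
      also have "of_nat q - a - of_nat (q - k) + 1 = 1 - a + of_nat k"
        using k by (simp add: of_nat_diff)
      finally show ?thesis .
    qed
    have pp: "pochhammer (1 - a) q = pochhammer (1 - a) k * pochhammer (1 - a + of_nat k) (q - k)"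
      by (rule pochhammer_product[OF k])
    have s: "(-1::complex)^(q-k) * (-1)^k = (-1)^q"
      using k by (simp flip: power_add)
    have "(-1)^(q-k) * of_nat ((p+k-1) choose k) / (pochhammer (1-a) k * fact (q-k))
        = ((-1)^(q-k) * (-1)^k) * ((- of_nat p) gchoose k) * (pochhammer (1 - a + of_nat k) (q - k) / fact (q - k)) / pochhammer (1-a) q"
      unfolding c pp using nz[of k] nz[of q] pp
      by (simp add: field_simps)
    also have "\<dots> = (-1)^q * (((- of_nat p) gchoose k) * ((of_nat q - a) gchoose (q - k))) / pochhammer (1-a) q"
      unfolding s g by simp
    finally show ?thesis .
  qed
  have "(\<Sum>k\<le>q. (-1)^(q-k) * of_nat ((p+k-1) choose k) / (pochhammer (1-a) k * fact (q-k)))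
      = (\<Sum>k\<le>q. (-1)^q * (((- of_nat p) gchoose k) * ((of_nat q - a) gchoose (q - k))) / pochhammer (1-a) q)"
    by (rule sum.cong[OF refl], rule t) simp
  also have "\<dots> = (-1)^q * (\<Sum>k\<in>{0..q}. ((- of_nat p) gchoose k) * ((of_nat q - a) gchoose (q - k))) / pochhammer (1-a) q"
    by (simp add: sum_divide_distrib sum_distrib_left atMost_atLeast0)
  also have "\<dots> = (-1)^q * ((- of_nat p + (of_nat q - a)) gchoose q) / pochhammer (1-a) q"
    by (simp only: gbinomial_Vandermonde)
  also have "(- of_nat p + (of_nat q - a)) gchoose q = (-1)^q * pochhammer (a + of_int (int p - int q)) q / fact q"
  proof -
    have "(- of_nat p + (of_nat q - a)) gchoose q = (-1)^q * pochhammer (- (- of_nat p + (of_nat q - a))) q / fact q"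
      by (rule gbinomial_pochhammer)
    also have "- (- of_nat p + (of_nat q - a)) = a + of_int (int p - int q)" by simp
    finally show ?thesis .
  qed
  also have "(-1)^q * ((-1)^q * pochhammer (a + of_int (int p - int q)) q / fact q) / pochhammer (1-a) q
     = pochhammer (a + of_int (int p - int q)) q / (pochhammer (1-a) q * fact q)"
    by (simp flip: power_add add: mult_2[symmetric])
  finally show ?thesis .
qed



lemma P1a_nz:
  fixes a :: complex
  assumes "a \<notin> \<int>"
  shows "pochhammer (1 - a) n \<noteq> 0"
proof
  assume "pochhammer (1 - a) n = 0"
  then obtain j where "1 - a = - of_nat j" by (auto simp: pochhammer_eq_0_iff)
  then have "a = of_int (int j + 1)" by (simp add: algebra_simps)
  with assms show False by auto
qed

lemma term_eq:
  fixes a b c d :: complex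
  assumes a: "a \<notin> \<int>" and d: "\<forall>n::nat. d \<noteq> - of_nat n"
    and kl: "1 \<le> l" "l \<le> k" "k \<le> q" "l \<le> p"
  shows "((-1) ^ (k - l) * fact (k - 1) / (fact (l - 1) * fact l * fact (k - l))
               * pochhammer b k * pochhammer c k
               / (pochhammer (1 - a) k * pochhammer (1 - a) (k - l) * pochhammer d l))
         * ((-1) ^ (q - k) * H11 (a - of_nat k + of_nat l) (b + of_nat k) (c + of_nat k) (d + of_nat l) (p - l) (q - k))
       = pochhammer b q * pochhammer c q / pochhammer d p * (Gamma (a + of_int (int p - int q)) / Gamma a)
         * ((-1)^(q-k) / (pochhammer (1 - a) k * fact (q - k)))
         * (fact (k-1) * fact p / (fact (l-1) * fact l * fact (k-l) * fact (p-l))) / fact p"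
proof -
  define A where "A = a - of_nat k + of_nat l"
  have Aeq: "A = a + of_int (- int (k - l))" using kl by (simp add: A_def of_nat_diff)
  have Anz: "A \<notin> \<int>" "A \<notin> \<int>\<^sub>\<le>\<^sub>0" using notint_shift[OF a] Aeq by auto
  have GA: "Gamma A \<noteq> 0" using Anz by (simp add: Gamma_eq_zero_iff)
  have Ga: "Gamma a \<noteq> 0" using notint_shift[OF a, of 0] by (simp add: Gamma_eq_zero_iff)
  have f1: "pochhammer b q = pochhammer b k * pochhammer (b + of_nat k) (q - k)"
    by (rule pochhammer_product) (use kl in auto)
  have f2: "pochhammer c q = pochhammer c k * pochhammer (c + of_nat k) (q - k)"
    by (rule pochhammer_product) (use kl in auto)
  have f3: "pochhammer d p = pochhammer d l * pochhammer (d + of_nat l) (p - l)"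
    by (rule pochhammer_product) (use kl in auto)
  have dnz: "pochhammer d p \<noteq> 0" using d by (auto simp: pochhammer_eq_0_iff)
  have d1: "pochhammer d l \<noteq> 0" "pochhammer (d + of_nat l) (p - l) \<noteq> 0"
    using dnz f3 by auto
  have f4: "pochhammer (1 - a) (k - l) = (-1)^(k-l) * (Gamma a / Gamma A)"
  proof -
    have "pochhammer (- (a - 1)) (k - l) = (-1)^(k-l) * pochhammer (a - 1 - of_nat (k-l) + 1) (k - l)"
      by (rule pochhammer_minus)
    moreover have "a - 1 - of_nat (k-l) + 1 = A" using kl by (simp add: A_def of_nat_diff)
    moreover have "pochhammer A (k - l) = Gamma (A + of_nat (k - l)) / Gamma A"
      using Anz by (intro pochhammer_Gamma) auto
    moreover have "A + of_nat (k - l) = a" using kl by (simp add: A_def of_nat_diff)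
    ultimately show ?thesis by simp
  qed
  have f5: "poch_int A (int (p - l) - int (q - k)) = Gamma (a + of_int (int p - int q)) / Gamma A"
  proof -
    have "A + of_int (int (p - l) - int (q - k)) = a + of_int (int p - int q)"
      using kl by (simp add: A_def of_nat_diff)
    then show ?thesis using poch_int_Gamma[OF Anz(1)] by simp
  qed
  have P: "pochhammer (1 - a) k \<noteq> 0" by (rule P1a_nz[OF a])
  show ?thesis
    unfolding f1 f2 f3 f4 H11_def A_def[symmetric] f5
    using GA Ga d1 P by (simp add: field_simps)
qed



theorem mainTheorem13:
  fixes a b c d :: complex
  assumes "a \<notin> \<int>" and "\<forall>n::nat. d \<noteq> - of_nat n"
  defines "T \<equiv> (\<lambda>(k, l). bsmult
              ((-1) ^ (k - l) * fact (k - 1) / (fact (l - 1) * fact l * fact (k - l))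
               * pochhammer b k * pochhammer c k
               / (pochhammer (1 - a) k * pochhammer (1 - a) (k - l) * pochhammer d l))
              (bmul (bmono l k)
                (bnegy (H11 (a - of_nat k + of_nat l) (b + of_nat k) (c + of_nat k) (d + of_nat l)))))"
      and "I \<equiv> {(k::nat, l::nat). 1 \<le> k \<and> 1 \<le> l \<and> l \<le> k}"
  shows "bsummable T I \<and>
         bmul (hyp1F1 a d) (hyp2F1y b c (1 - a)) = badd (bnegy (H11 a b c d)) (bsum T I)"
proof -
  note a = assms(1) and d = assms(2)
  define coef where "coef k l = ((-1) ^ (k - l) * fact (k - 1) / (fact (l - 1) * fact l * fact (k - l))
               * pochhammer b k * pochhammer c k
               / (pochhammer (1 - a) k * pochhammer (1 - a) (k - l) * pochhammer d l))" for k l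
  have Tc: "T (k, l) p q = coef k l * (if l \<le> p \<and> k \<le> q then
      (-1) ^ (q - k) * H11 (a - of_nat k + of_nat l) (b + of_nat k) (c + of_nat k) (d + of_nat l) (p - l) (q - k) else 0)"
    for k l p q
    unfolding T_def coef_def bsmult_def bmul_mono_coeff by (simp add: bnegy_def)
  define S where "S p q = Sigma {1..q} (\<lambda>k. {1..min k p})" for p q :: nat
  have finS: "finite (S p q)" for p q unfolding S_def by auto
  have sub: "{i \<in> I. T i p q \<noteq> 0} \<subseteq> S p q" for p q
    by (auto simp: I_def S_def Tc split: if_splits)
  have summ: "bsummable T I"
    unfolding bsummable_def using sub finS by (meson finite_subset)
  have "bmul (hyp1F1 a d) (hyp2F1y b c (1 - a)) p q = badd (bnegy (H11 a b c d)) (bsum T I) p q" for p q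
  proof -
    define E where "E = Gamma (a + of_int (int p - int q)) / Gamma a"
    define X where "X = pochhammer b q * pochhammer c q / pochhammer d p * E"
    define u where "u k = (-1)^(q-k) * of_nat ((p+k-1) choose k) / (pochhammer (1-a) k * fact (q-k))" for k
    have "bsum T I p q = (\<Sum>i\<in>S p q. T i p q)"
      unfolding bsum_def
    proof (rule sum.mono_neutral_left[OF finS sub])
      show "\<forall>i\<in>S p q - {i \<in> I. T i p q \<noteq> 0}. T i p q = 0"
        by (auto simp: S_def I_def)
    qed
    also have "\<dots> = (\<Sum>k\<in>{1..q}. \<Sum>l\<in>{1..min k p}. T (k, l) p q)"
      unfolding S_def by (subst sum.Sigma) (auto simp: case_prod_beta)
    also have "\<dots> = (\<Sum>k\<in>{1..q}. X / fact p * u k)"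
    proof (rule sum.cong[OF refl])
      fix k assume k: "k \<in> {1..q}"
      have "(\<Sum>l\<in>{1..min k p}. T (k, l) p q) = (\<Sum>l\<in>{1..min k p}.
           X * ((-1)^(q-k) / (pochhammer (1 - a) k * fact (q - k))) / fact p
           * of_nat (((k-1) choose (l-1)) * (p choose l)))"
      proof (rule sum.cong[OF refl])
        fix l assume l: "l \<in> {1..min k p}"
        have "T (k, l) p q = pochhammer b q * pochhammer c q / pochhammer d p * E
         * ((-1)^(q-k) / (pochhammer (1 - a) k * fact (q - k)))
         * (fact (k-1) * fact p / (fact (l-1) * fact l * fact (k-l) * fact (p-l))) / fact p"
        proof -
          have "T (k, l) p q = coef k l * ((-1) ^ (q - k) * H11 (a - of_nat k + of_nat l) (b + of_nat k) (c + of_nat k) (d + of_nat l) (p - l) (q - k))"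
            using Tc l k by simp
          also have "\<dots> = pochhammer b q * pochhammer c q / pochhammer d p * E
         * ((-1)^(q-k) / (pochhammer (1 - a) k * fact (q - k)))
         * (fact (k-1) * fact p / (fact (l-1) * fact l * fact (k-l) * fact (p-l))) / fact p"
            unfolding coef_def E_def by (rule term_eq[OF a d]) (use l k in auto)
          finally show ?thesis .
        qed
        also have "fact (k-1) * fact p / (fact (l-1) * fact l * fact (k-l) * fact (p-l))
             = (of_nat (((k-1) choose (l-1)) * (p choose l)) :: complex)"
          using l k by (intro term_fact) auto
        finally show "T (k, l) p q = X * ((-1)^(q-k) / (pochhammer (1 - a) k * fact (q - k))) / fact p
           * of_nat (((k-1) choose (l-1)) * (p choose l))"
          by (simp add: X_def)
      qed
      also have "\<dots> = X * ((-1)^(q-k) / (pochhammer (1 - a) k * fact (q - k))) / fact p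
           * of_nat (\<Sum>l\<in>{1..min k p}. ((k-1) choose (l-1)) * (p choose l))"
        by (simp add: sum_distrib_left)
      also have "\<dots> = X / fact p * u k"
      proof -
        have v: "(\<Sum>l\<in>{1..min k p}. ((k-1) choose (l-1)) * (p choose l)) = (p+k-1) choose k"
          using k by (intro vand_sum) auto
        show ?thesis unfolding v u_def by (simp add: field_simps)
      qed
      finally show "(\<Sum>l\<in>{1..min k p}. T (k, l) p q) = X / fact p * u k" .
    qed
    finally have bs: "bsum T I p q = X / fact p * (\<Sum>k\<in>{1..q}. u k)"
      by (simp add: sum_distrib_left)
    have h0: "bnegy (H11 a b c d) p q = X / fact p * u 0"
      unfolding bnegy_def H11_def X_def E_def u_def
      by (simp add: poch_int_Gamma[OF a] mult_ac)
    have split: "{..q} = insert 0 {1..q}" by auto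
    have tot: "badd (bnegy (H11 a b c d)) (bsum T I) p q = X / fact p * (\<Sum>k\<le>q. u k)"
      unfolding badd_def bs h0 split by (simp add: distrib_left)
    have ch: "(\<Sum>k\<le>q. u k) = pochhammer (a + of_int (int p - int q)) q / (pochhammer (1-a) q * fact q)"
      unfolding u_def by (rule chu[OF a])
    have EP: "E * pochhammer (a + of_int (int p - int q)) q = pochhammer a p"
    proof -
      have x: "a + of_int (int p - int q) \<notin> \<int>\<^sub>\<le>\<^sub>0" by (rule notint_shift[OF a])
      have a0: "a \<notin> \<int>\<^sub>\<le>\<^sub>0" using notint_shift[OF a, of 0] by simp
      have Gx: "Gamma (a + of_int (int p - int q)) \<noteq> 0" using x by (simp add: Gamma_eq_zero_iff)
      have "a + of_int (int p - int q) + of_nat q = a + of_nat p" by simp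
      then show ?thesis unfolding E_def
        using pochhammer_Gamma[OF x, of q] pochhammer_Gamma[OF a0, of p] Gx by simp
    qed
    show ?thesis
      unfolding tot ch bmul_hyp X_def using EP[symmetric]
      by (simp add: field_simps)
  qed
  then show ?thesis using summ by blast
qed


end
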